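(* For every integer $n\ge 0$, \[ d_{n,q}=\begin{cases} 1, & n=0,\\[4pt] \displaystyle\frac{[2]_q}{2}\frac{(-4)^n}{n!}D_{n,q}(0|1)-q\sum_{m=0}^{n-1}\frac{(-4)^{n-m-1}}{(n-m-1)!}D_{n-m-1,q}(0|1)\,C_m, & n\ge 1.\end{cases} \]
   Context: Let $p$ be a fixed odd prime, $\mathbb{C}_p$ the completion of the algebraic closure of $\mathbb{Q}_p$, with $|p|_p=1/p$. Let $q\in\mathbb{C}_p$ with $|1-q|_p<p^{-1/(p-1)}$, and $\log$ denotes the $p$-adic logarithm. Put $[x]_q=\frac{1-q^x}{1-q}$, so $[2]_q=1+q$. $C_m=\frac{1}{m+1}\binom{2m}{m}$ is the $m$-th Catalan number. The numbers $D_{n,q}(0|1)$ are defined by \[ \frac{2(q-1)+\frac{q-1}{\log q}\log(1+t)}{q^{2}(1+t)-1}=\sum_{n=0}^{\infty}D_{n,q}(0|1)\frac{t^n}{n!}. \] The $q$-analogues of the Catalan–Daehee numbers $d_{n,q}$ are defined by \[ \frac{q-1+\frac{q-1}{\log q}\cdot\frac12\log(1-4t)}{q\sqrt{1-4t}-1}=\sum_{n=0}^{\infty}d_{n,q}t^n, \] for $t\in\mathbb{C}_p$ with $|t|_p<p^{-1/(p-1)}$ (equivalently as power series in $t$). *)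

theory Defs
  imports "HOL-Computational_Algebra.Formal_Power_Series"
begin

definition q_num :: "'a::field \<Rightarrow> nat \<Rightarrow> 'a" where
  "q_num q x = (1 - q ^ x) / (1 - q)"

definition catalan :: "nat \<Rightarrow> 'a::field_char_0" where
  "catalan m = of_nat ((2*m) choose m) / of_nat (m + 1)"

text \<open>Formal power series log(1+t) is fps_ln 1; sqrt(1+t) is fps_binomial (1/2).
  The parameter L plays the role of the p-adic logarithm log q.\<close>

definition D_gf :: "'a::field_char_0 \<Rightarrow> 'a \<Rightarrow> 'a fps" where
  "D_gf q L = (fps_const (2 * (q - 1)) + fps_const ((q - 1) / L) * fps_ln 1)
              / (fps_const (q ^ 2) * (1 + fps_X) - 1)"

definition D_num :: "'a::field_char_0 \<Rightarrow> 'a \<Rightarrow> nat \<Rightarrow> 'a" where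
  "D_num q L n = fact n * fps_nth (D_gf q L) n"

definition sqrt_1m4t :: "'a::field_char_0 fps" where
  "sqrt_1m4t = fps_binomial (1/2) oo (fps_const (-4) * fps_X)"

definition log_1m4t :: "'a::field_char_0 fps" where
  "log_1m4t = fps_ln 1 oo (fps_const (-4) * fps_X)"

definition d_gf :: "'a::field_char_0 \<Rightarrow> 'a \<Rightarrow> 'a fps" where
  "d_gf q L = (fps_const (q - 1) + fps_const ((q - 1) / L) * fps_const (1/2) * log_1m4t)
              / (fps_const q * sqrt_1m4t - 1)"

definition d_num :: "'a::field_char_0 \<Rightarrow> 'a \<Rightarrow> nat \<Rightarrow> 'a" where
  "d_num q L n = fps_nth (d_gf q L) n"

end

theory Submission
  imports Defs
begin
unbundle fps_syntax

lemma cat_rec_nat: "((2*Suc m) choose Suc m) * (Suc m) * (m+1) = ((2*m) choose m) * (2*(2*m+1)) * (m + 1)"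
proof -
  define A where "A = (Suc (Suc (2*m)) choose Suc m)"
  define B where "B = ((2*m) choose m)"
  define C where "C = (Suc (2*m) choose m)"
  define C' where "C' = (Suc (2*m) choose Suc m)"
  have a: "Suc (Suc (2*m)) * C = A * Suc m"
    unfolding A_def C_def by (rule Suc_times_binomial_eq)
  have b: "Suc (2*m) * B = C' * Suc m"
    unfolding B_def C'_def by (rule Suc_times_binomial_eq)
  have c: "C' = C"
  proof -
    have e: "Suc (2*m) - m = Suc m" by simp
    have "Suc (2*m) choose m = Suc (2*m) choose (Suc (2*m) - m)" by (rule binomial_symmetric) simp
    thus ?thesis unfolding C_def C'_def e by (rule sym)
  qed
  have "A * Suc m * (m+1) = (A * Suc m) * Suc m" by simp
  also have "\<dots> = (Suc (Suc (2*m)) * C) * Suc m" by (simp only: a)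
  also have "\<dots> = Suc (Suc (2*m)) * (C * Suc m)" by (simp only: mult_ac)
  also have "\<dots> = Suc (Suc (2*m)) * (Suc (2*m) * B)" using b c by simp
  also have "\<dots> = B * (2*(2*m+1)) * (m + 1)" by (simp add: algebra_simps)
  finally have "A * Suc m * (m+1) = B * (2*(2*m+1)) * (m + 1)" .
  moreover have "(2*Suc m) = Suc (Suc (2*m))" by simp
  ultimately show ?thesis unfolding A_def B_def by simp
qed

lemma cat_rec: "(catalan (Suc m) :: 'a::field_char_0) * (of_nat m + 2) = catalan m * (2*(2*of_nat m+1))"
proof -
  define A where "A = (of_nat ((2*Suc m) choose Suc m) :: 'a)"
  define B where "B = (of_nat ((2*m) choose m) :: 'a)"
  have c1: "catalan (Suc m) = A / of_nat (Suc m + 1)" by (simp only: catalan_def A_def)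
  have c2: "catalan m = B / of_nat (m + 1)" by (simp only: catalan_def B_def)
  have "(of_nat (((2*Suc m) choose Suc m) * (Suc m) * (m+1)) :: 'a) = of_nat (((2*m) choose m) * (2*(2*m+1)) * (m + 1))"
    by (simp only: cat_rec_nat)
  hence e: "A * of_nat (Suc m) * of_nat (m+1) = B * of_nat (2*(2*m+1)) * of_nat (m + 1)"
    unfolding A_def B_def of_nat_mult .
  have p1: "(of_nat m + 1 :: 'a) \<noteq> 0" "(of_nat m + 2 :: 'a) \<noteq> 0"
    by (metis of_nat_Suc of_nat_eq_0_iff add.commute nat.simps(3), metis of_nat_add of_nat_numeral of_nat_eq_0_iff add_eq_0_iff_both_eq_0 zero_neq_numeral)
  have nz: "(of_nat (m+1) :: 'a) \<noteq> 0" by (simp only: of_nat_eq_0_iff)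
  have e1: "A * of_nat (Suc m) = B * of_nat (2*(2*m+1))"
    using e nz mult_right_cancel by (metis mult.assoc)
  have e2: "A = B * of_nat (2*(2*m+1)) / of_nat (m + 1)"
    using e1 nz by (simp add: field_simps)
  have l: "catalan (Suc m) * (of_nat m + 2) = A" using p1(2) unfolding c1 by (simp add: field_simps)
  have r: "catalan m * (2*(2*of_nat m+1)) = A" unfolding c2 e2 by (simp add: field_simps)
  show ?thesis using l r by simp
qed

lemma half_gchoose: "(-4) ^ Suc k * ((1/2 :: 'a::field_char_0) gchoose Suc k) = -2 * catalan k"
proof (induction k)
  case 0
  then show ?case by (simp add: catalan_def)
next
  case (Suc k)
  have p: "(of_nat k + 2 :: 'a) \<noteq> 0"
    by (metis of_nat_add of_nat_numeral of_nat_eq_0_iff add_eq_0_iff_both_eq_0 zero_neq_numeral)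
  define g where "g = ((1/2 :: 'a) gchoose Suc k)"
  define g' where "g' = ((1/2 :: 'a) gchoose Suc (Suc k))"
  have "1/2 * g = of_nat (Suc k) * g + of_nat (Suc (Suc k)) * g'"
    unfolding g_def g'_def by (rule gbinomial_mult_1)
  hence "of_nat (Suc (Suc k)) * g' = 1/2 * g - of_nat (Suc k) * g" by (metis add_diff_cancel_left')
  hence r: "(of_nat k + 2) * ((1/2 :: 'a) gchoose Suc (Suc k)) = (1/2 - of_nat (Suc k)) * ((1/2) gchoose Suc k)"
    unfolding g_def[symmetric] g'_def[symmetric] by (simp add: algebra_simps)
  have "(of_nat k + 2) * ((-4) ^ Suc (Suc k) * g') = (-4) * ((-4) ^ Suc k) * ((of_nat k + 2) * g')"
    by (simp only: power_Suc mult_ac)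
  also have "\<dots> = (-4) * ((-4) ^ Suc k) * ((1/2 - of_nat (Suc k)) * g)"
    using r unfolding g_def g'_def by simp
  also have "\<dots> = (-4) * (1/2 - of_nat (Suc k)) * ((-4) ^ Suc k * g)"
    by (simp only: mult_ac)
  also have "\<dots> = (-4) * (1/2 - of_nat (Suc k)) * (-2 * catalan k)"
    using Suc.IH unfolding g_def by simp
  also have "\<dots> = -2 * (catalan k * (2*(2*of_nat k+1)))"
    by (simp add: algebra_simps)
  also have "\<dots> = -2 * (catalan (Suc k) * (of_nat k + 2))"
    by (simp only: cat_rec)
  also have "\<dots> = (of_nat k + 2) * (-2 * catalan (Suc k))"
    by (simp only: mult_ac)
  finally have "(of_nat k + 2) * ((-4) ^ Suc (Suc k) * g') = (of_nat k + 2) * (-2 * catalan (Suc k))" .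
  then have "(-4) ^ Suc (Suc k) * g' = -2 * catalan (Suc k)" using p mult_left_cancel by blast
  then show ?case unfolding g'_def .
qed


abbreviation cc :: "'a::field_char_0 fps" where "cc \<equiv> fps_const (-4) * fps_X"

lemma cc0: "(cc :: 'a::field_char_0 fps) $ 0 = 0" by simp

lemma S2: "(sqrt_1m4t :: 'a::field_char_0 fps)^2 = 1 + cc"
proof -
  have "(sqrt_1m4t :: 'a fps)^2 = (fps_binomial (1/2))^2 oo cc"
    unfolding sqrt_1m4t_def by (rule fps_compose_power[OF cc0])
  also have "(fps_binomial (1/2) :: 'a fps)^2 = fps_binomial 1"
    by (simp add: power2_eq_square fps_binomial_add_mult[symmetric])
  also have "fps_binomial 1 oo cc = (1 + cc :: 'a fps)"
    by (simp add: fps_binomial_1 fps_compose_add_distrib)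
  finally show ?thesis .
qed

lemma Sform: "(sqrt_1m4t :: 'a::field_char_0 fps) = 1 - fps_const 2 * fps_X * Abs_fps catalan"
proof (rule fps_ext)
  fix n
  show "sqrt_1m4t $ n = (1 - fps_const 2 * fps_X * Abs_fps catalan :: 'a fps) $ n"
  proof (cases n)
    case 0 then show ?thesis by (simp add: sqrt_1m4t_def)
  next
    case (Suc k)
    have "(sqrt_1m4t :: 'a fps) $ n = (-4) ^ Suc k * ((1/2 :: 'a) gchoose Suc k)"
      unfolding sqrt_1m4t_def fps_compose_linear Suc by simp
    also have "\<dots> = -2 * catalan k" by (rule half_gchoose)
    finally show ?thesis using Suc by (simp add: mult.assoc)
  qed
qed


lemma main_id:
  fixes q L :: "'a::field_char_0"
  assumes q1: "q \<noteq> 1" and q2: "q \<noteq> -1"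
  shows "d_gf q L = fps_const (1/2) * (fps_const q * sqrt_1m4t + 1) * (D_gf q L oo cc)"
proof -
  define N :: "'a fps" where "N = fps_const (2 * (q - 1)) + fps_const ((q - 1) / L) * fps_ln 1"
  define Dn :: "'a fps" where "Dn = fps_const (q ^ 2) * (1 + fps_X) - 1"
  define G where "G = D_gf q L oo cc"
  define S :: "'a fps" where "S = sqrt_1m4t"
  have qq: "q^2 - 1 \<noteq> 0"
  proof
    assume "q^2 - 1 = 0"
    hence "(q - 1) * (q + 1) = 0" by (simp add: algebra_simps power2_eq_square)
    thus False using q1 q2 by (simp add: add_eq_0_iff) (metis minus_equation_iff)
  qed
  have Dn0: "Dn $ 0 \<noteq> 0" unfolding Dn_def using qq by simp
  have "D_gf q L * Dn = N"
    unfolding D_gf_def N_def[symmetric] Dn_def[symmetric] fps_divide_unit[OF Dn0]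
    using inverse_mult_eq_1[OF Dn0] by (simp add: mult.assoc)
  hence "(D_gf q L * Dn) oo cc = N oo cc" by simp
  hence e1: "G * (Dn oo cc) = N oo cc" unfolding G_def fps_compose_mult_distrib[OF cc0] .
  have Dnc: "Dn oo cc = fps_const (q^2) * S^2 - 1"
    unfolding Dn_def S_def S2
    by (simp only: fps_compose_sub_distrib fps_compose_mult_distrib[OF cc0] fps_compose_add_distrib fps_const_compose fps_compose_1 fps_X_fps_compose_startby0[OF cc0])
  have Nc: "N oo cc = fps_const (2 * (q - 1)) + fps_const ((q - 1) / L) * log_1m4t"
    unfolding N_def log_1m4t_def
    by (simp only: fps_compose_sub_distrib fps_compose_mult_distrib[OF cc0] fps_compose_add_distrib fps_const_compose fps_compose_1 fps_X_fps_compose_startby0[OF cc0])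
  define Dd where "Dd = fps_const q * S - 1"
  have S0: "S $ 0 = 1" unfolding S_def sqrt_1m4t_def by simp
  have Dd0: "Dd $ 0 \<noteq> 0" unfolding Dd_def using S0 q1 by simp
  have fac: "fps_const (q^2) * S^2 - 1 = (fps_const q * S + 1) * Dd"
  proof -
    have h1: "fps_const (q^2) = fps_const q * fps_const q" by (simp add: power2_eq_square)
    have h2: "\<And>c S :: 'a fps. c*c*S^2 - 1 = (c*S+1)*(c*S-1)" by (simp add: algebra_simps power2_eq_square)
    show ?thesis unfolding Dd_def h1 by (rule h2)
  qed
  have Nd: "fps_const (q - 1) + fps_const ((q - 1) / L) * fps_const (1/2) * log_1m4t
      = fps_const (1/2) * (N oo cc)"
  proof -
    have "q - 1 = 1/2 * (2 * (q - 1))" by simp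
    hence h1: "fps_const (q - 1) = fps_const (1/2) * fps_const (2 * (q - 1))" by (metis fps_const_mult)
    have h2: "\<And>a b c l :: 'a fps. a*b + c*a*l = a*(b + c*l)" by (simp add: algebra_simps)
    show ?thesis unfolding Nc h1 by (rule h2)
  qed
  also have "\<dots> = fps_const (1/2) * (fps_const q * S + 1) * G * Dd"
    unfolding e1[symmetric] Dnc fac by (simp add: mult_ac)
  finally have "d_gf q L = (fps_const (1/2) * (fps_const q * S + 1) * G * Dd) / Dd"
    unfolding d_gf_def S_def[symmetric] Dd_def[symmetric] by simp
  also have "\<dots> = fps_const (1/2) * (fps_const q * S + 1) * G"
    unfolding fps_divide_unit[OF Dd0] using inverse_mult_eq_1'[OF Dd0] by (simp add: mult.assoc)
  finally show ?thesis unfolding S_def G_def .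
qed


theorem theorem1:
  fixes q L :: "'a::field_char_0" and n :: nat
  assumes "q \<noteq> 1" and "q \<noteq> -1" and "L \<noteq> 0"
  shows "d_num q L n =
    (if n = 0 then 1
     else q_num q 2 / 2 * (-4) ^ n / fact n * D_num q L n
          - q * (\<Sum>m<n. (-4) ^ (n - m - 1) / fact (n - m - 1) * D_num q L (n - m - 1) * catalan m))"
proof -
  define G where "G = D_gf q L oo cc"
  define C :: "'a fps" where "C = Abs_fps catalan"
  have Gn: "G $ k = (-4) ^ k * D_gf q L $ k" for k
    unfolding G_def fps_compose_linear by simp
  have GD: "(-4) ^ k / fact k * D_num q L k = G $ k" for k
    unfolding Gn D_num_def by simp
  have qn: "q_num q 2 = 1 + q" unfolding q_num_def using assms(1)
    by (simp add: field_simps power2_eq_square)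
  have gen: "\<And>h c t X C G :: 'a fps. h*(c*(1 - t*X*C)+1)*G = (h*c + h)*G - (h*t*c)*(X*(C*G))"
    by (simp add: algebra_simps)
  have c1: "fps_const (1/2) * fps_const q + fps_const (1/2) = (fps_const ((1+q)/2) :: 'a fps)"
    by (simp add: field_simps)
  have c2: "fps_const (1/2) * fps_const 2 * fps_const q = (fps_const q :: 'a fps)"
    by simp
  have dg: "d_gf q L = fps_const ((1+q)/2) * G - fps_const q * (fps_X * (C * G))"
    unfolding main_id[OF assms(1,2)] Sform G_def[symmetric] C_def[symmetric] gen c1 c2 ..
  have dn: "d_num q L n = (1+q)/2 * G $ n - q * (if n = 0 then 0 else (\<Sum>i=0..n-1. catalan i * G $ (n - 1 - i)))"
    unfolding d_num_def dg fps_sub_nth fps_mult_left_const_nth fps_X_mult_nth fps_mult_nth[of C G]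
    by (simp add: C_def)
  show ?thesis
  proof (cases n)
    case 0
    have Dd0: "(fps_const q * sqrt_1m4t - 1 :: 'a fps) $ 0 \<noteq> 0" using assms(1) by (simp add: sqrt_1m4t_def)
    have "d_num q L 0 = 1"
      unfolding d_num_def d_gf_def fps_divide_unit[OF Dd0] using assms(1)
      by (simp add: sqrt_1m4t_def log_1m4t_def)
    then show ?thesis using 0 by simp
  next
    case (Suc k)
    have "(\<Sum>m<n. (-4) ^ (n - m - 1) / fact (n - m - 1) * D_num q L (n - m - 1) * catalan m)
        = (\<Sum>i=0..n-1. catalan i * G $ (n - 1 - i))"
      unfolding GD using Suc by (simp add: atLeast0AtMost lessThan_Suc_atMost mult.commute)
    then show ?thesis unfolding dn qn GD[symmetric] using Suc by simp
  qed
qed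

end
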